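(* Let $\Gamma$ be a countable discrete group, $\gamma_1\neq\gamma_2\in\Gamma$, $a,b\in\mathbb{C}\setminus\{0\}$, and $f=a\delta_{\gamma_1}+b\delta_{\gamma_2}\in\ell_2(\Gamma)$. If $|a|\neq|b|$, then $\{\lambda(\gamma)f:\gamma\in\Gamma\}$ is a Riesz basis for $\ell_2(\Gamma)$.
   Context: $\lambda$ is the left regular representation of $\Gamma$ on $\ell_2(\Gamma)$, $\lambda(\gamma)\delta_{\gamma'}=\delta_{\gamma\gamma'}$, where $\{\delta_\gamma\}$ is the canonical basis. *)

theory Defs
  imports "HOL-Analysis.Analysis"
begin

text \<open>The group \<Gamma> is modelled as a type 'g of class group_add (written additively,
  not assumed commutative) and countable.\<close>

definition ell2 :: "('g \<Rightarrow> complex) set" where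
  "ell2 = {x. (\<lambda>i. (cmod (x i))\<^sup>2) summable_on UNIV}"

definition l2norm :: "('g \<Rightarrow> complex) \<Rightarrow> real" where
  "l2norm x = sqrt (\<Sum>\<^sub>\<infinity>i. (cmod (x i))\<^sup>2)"

definition delta :: "'g \<Rightarrow> 'g \<Rightarrow> complex" where
  "delta g = (\<lambda>h. if h = g then 1 else 0)"

text \<open>Left regular representation: (lreg \<gamma> x)(h) = x(\<gamma>\<inverse> h), so lreg \<gamma> (delta \<gamma>') = delta (\<gamma> \<gamma>').\<close>
definition lreg :: "'g::group_add \<Rightarrow> ('g \<Rightarrow> complex) \<Rightarrow> ('g \<Rightarrow> complex)" where
  "lreg \<gamma> x = (\<lambda>h. x (- \<gamma> + h))"

definition riesz_basis :: "('i \<Rightarrow> 'g \<Rightarrow> complex) \<Rightarrow> bool" where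
  "riesz_basis F \<longleftrightarrow>
     (\<forall>k. F k \<in> ell2) \<and>
     (\<forall>x\<in>ell2. \<forall>e>0. \<exists>S c. finite S \<and>
         l2norm (\<lambda>i. x i - (\<Sum>k\<in>S. c k * F k i)) < e) \<and>
     (\<exists>A B. 0 < A \<and> 0 < B \<and>
        (\<forall>S c. finite S \<longrightarrow>
           A * (\<Sum>k\<in>S. (cmod (c k))\<^sup>2) \<le> (l2norm (\<lambda>i. \<Sum>k\<in>S. c k * F k i))\<^sup>2 \<and>
           (l2norm (\<lambda>i. \<Sum>k\<in>S. c k * F k i))\<^sup>2 \<le> B * (\<Sum>k\<in>S. (cmod (c k))\<^sup>2)))"

end

theory Submission
  imports Defs
begin


lemma l2_bound:
  assumes "\<And>F. finite F \<Longrightarrow> L2_set (\<lambda>i. cmod (r i)) F \<le> C"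
  shows "r \<in> ell2 \<and> l2norm r \<le> C"
proof -
  have C0: "0 \<le> C" using assms[of "{}"] by simp
  have fs: "sum (\<lambda>i. (cmod (r i))\<^sup>2) F \<le> C\<^sup>2" if "finite F" for F
  proof -
    have "L2_set (\<lambda>i. cmod (r i)) F \<le> C" using assms that by blast
    then have "(L2_set (\<lambda>i. cmod (r i)) F)\<^sup>2 \<le> C\<^sup>2"
      by (intro power_mono) (auto intro: L2_set_nonneg)
    then show ?thesis by (simp add: L2_set_def sum_nonneg)
  qed
  have sm: "(\<lambda>i. (cmod (r i))\<^sup>2) summable_on UNIV"
    apply (rule nonneg_bdd_above_summable_on)
     apply simp
    using fs by (auto simp: bdd_above_def)
  have "(\<Sum>\<^sub>\<infinity>i. (cmod (r i))\<^sup>2) \<le> C\<^sup>2"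
    by (rule infsum_le_finite_sums[OF sm]) (use fs in auto)
  then have "l2norm r \<le> sqrt (C\<^sup>2)" unfolding l2norm_def by (rule real_sqrt_le_mono)
  with C0 sm show ?thesis by (simp add: ell2_def)
qed

lemma l2_lower:
  assumes "r \<in> ell2" "finite F"
  shows "L2_set (\<lambda>i. cmod (r i)) F \<le> l2norm r"
proof -
  have "sum (\<lambda>i. (cmod (r i))\<^sup>2) F \<le> (\<Sum>\<^sub>\<infinity>i. (cmod (r i))\<^sup>2)"
  proof -
    have "sum (\<lambda>i. (cmod (r i))\<^sup>2) F = infsum (\<lambda>i. (cmod (r i))\<^sup>2) F" using assms by simp
    also have "\<dots> \<le> (\<Sum>\<^sub>\<infinity>i. (cmod (r i))\<^sup>2)"
      by (rule infsum_mono_neutral) (use assms in \<open>auto simp: ell2_def\<close>)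
    finally show ?thesis .
  qed
  then show ?thesis unfolding L2_set_def l2norm_def by simp
qed

lemma l2_finsupp:
  assumes "finite U" "\<And>h. h \<notin> U \<Longrightarrow> y h = 0"
  shows "y \<in> ell2 \<and> l2norm y = L2_set (\<lambda>i. cmod (y i)) U"
proof -
  have "(\<lambda>i. (cmod (y i))\<^sup>2) summable_on UNIV \<longleftrightarrow> (\<lambda>i. (cmod (y i))\<^sup>2) summable_on U"
    by (rule summable_on_cong_neutral) (use assms in auto)
  moreover have "(\<Sum>\<^sub>\<infinity>i. (cmod (y i))\<^sup>2) = infsum (\<lambda>i. (cmod (y i))\<^sup>2) U"
    by (rule infsum_cong_neutral) (use assms in auto)
  ultimately show ?thesis using assms(1) by (simp add: ell2_def l2norm_def L2_set_def)
qed

lemma l2_triangle: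
  assumes "p \<in> ell2" "q \<in> ell2"
  shows "(\<lambda>i. p i + q i) \<in> ell2 \<and> l2norm (\<lambda>i. p i + q i) \<le> l2norm p + l2norm q"
proof (rule l2_bound)
  fix F :: "'a set" assume F: "finite F"
  have "L2_set (\<lambda>i. cmod (p i + q i)) F \<le> L2_set (\<lambda>i. cmod (p i) + cmod (q i)) F"
    by (rule L2_set_mono) (auto simp: norm_triangle_ineq)
  also have "\<dots> \<le> L2_set (\<lambda>i. cmod (p i)) F + L2_set (\<lambda>i. cmod (q i)) F"
    by (rule L2_set_triangle_ineq)
  also have "\<dots> \<le> l2norm p + l2norm q"
    using l2_lower[OF assms(1) F] l2_lower[OF assms(2) F] by linarith
  finally show "L2_set (\<lambda>i. cmod (p i + q i)) F \<le> l2norm p + l2norm q" .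
qed

lemma l2_scale:
  assumes "p \<in> ell2"
  shows "(\<lambda>i. c * p i) \<in> ell2 \<and> l2norm (\<lambda>i. c * p i) \<le> cmod c * l2norm p"
proof (rule l2_bound)
  fix F :: "'a set" assume F: "finite F"
  have "L2_set (\<lambda>i. cmod (c * p i)) F = cmod c * L2_set (\<lambda>i. cmod (p i)) F"
    by (simp add: L2_set_right_distrib norm_mult)
  also have "\<dots> \<le> cmod c * l2norm p"
    using l2_lower[OF assms F] by (simp add: mult_left_mono)
  finally show "L2_set (\<lambda>i. cmod (c * p i)) F \<le> cmod c * l2norm p" .
qed

lemma l2_sum:
  assumes "finite I" "\<And>j. j \<in> I \<Longrightarrow> f j \<in> ell2"
  shows "(\<lambda>i. \<Sum>j\<in>I. f j i) \<in> ell2 \<and> l2norm (\<lambda>i. \<Sum>j\<in>I. f j i) \<le> (\<Sum>j\<in>I. l2norm (f j))"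
  using assms
proof (induction I rule: finite_induct)
  case empty
  then show ?case using l2_finsupp[of "{}" "\<lambda>i. 0"] by auto
next
  case (insert x F)
  have 1: "f x \<in> ell2" using insert by simp
  have 2: "(\<lambda>i. \<Sum>j\<in>F. f j i) \<in> ell2 \<and> l2norm (\<lambda>i. \<Sum>j\<in>F. f j i) \<le> (\<Sum>j\<in>F. l2norm (f j))"
    using insert by simp
  note 3 = l2_triangle[OF 1 2[THEN conjunct1]]
  show ?case using insert 2 3 by simp
qed



definition spanF :: "('k \<Rightarrow> 'g \<Rightarrow> complex) \<Rightarrow> ('g \<Rightarrow> complex) \<Rightarrow> bool" where
  "spanF F y \<longleftrightarrow> (\<exists>S c. finite S \<and> y = (\<lambda>i. \<Sum>k\<in>S. c k * F k i))"

lemma spanF_zero: "spanF F (\<lambda>i. 0)"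
  unfolding spanF_def by (rule exI[of _ "{}"]) simp

lemma spanF_single: "spanF F (\<lambda>i. \<alpha> * F k i)"
  unfolding spanF_def by (rule exI[of _ "{k}"], rule exI[of _ "\<lambda>_. \<alpha>"]) simp

lemma spanF_scale: "spanF F y \<Longrightarrow> spanF F (\<lambda>i. \<alpha> * y i)"
  unfolding spanF_def
proof (elim exE conjE)
  fix S c assume "finite S" "y = (\<lambda>i. \<Sum>k\<in>S. c k * F k i)"
  then show "\<exists>S c. finite S \<and> (\<lambda>i. \<alpha> * y i) = (\<lambda>i. \<Sum>k\<in>S. c k * F k i)"
    by (intro exI[of _ S] exI[of _ "\<lambda>k. \<alpha> * c k"]) (auto simp: sum_distrib_left mult.assoc)
qed

lemma spanF_add: "spanF F y1 \<Longrightarrow> spanF F y2 \<Longrightarrow> spanF F (\<lambda>i. y1 i + y2 i)"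
  unfolding spanF_def
proof (elim exE conjE)
  fix S1 c1 S2 c2 assume f: "finite S1" "finite S2" and y: "y1 = (\<lambda>i. \<Sum>k\<in>S1. c1 k * F k i)"
    "y2 = (\<lambda>i. \<Sum>k\<in>S2. c2 k * F k i)"
  define c where "c k = (if k \<in> S1 then c1 k else 0) + (if k \<in> S2 then c2 k else 0)" for k
  have e1: "(\<Sum>k\<in>S1 \<union> S2. (if k \<in> S1 then c1 k else 0) * F k i) = (\<Sum>k\<in>S1. c1 k * F k i)" for i
    by (rule sum.mono_neutral_cong_right) (use f in auto)
  have e2: "(\<Sum>k\<in>S1 \<union> S2. (if k \<in> S2 then c2 k else 0) * F k i) = (\<Sum>k\<in>S2. c2 k * F k i)" for i
    by (rule sum.mono_neutral_cong_right) (use f in auto)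
  have "(\<lambda>i. y1 i + y2 i) = (\<lambda>i. \<Sum>k\<in>S1 \<union> S2. c k * F k i)"
    unfolding y c_def by (auto simp: distrib_right sum.distrib e1 e2)
  then show "\<exists>S c. finite S \<and> (\<lambda>i. y1 i + y2 i) = (\<lambda>i. \<Sum>k\<in>S. c k * F k i)"
    using f by blast
qed

lemma spanF_sum: "finite I \<Longrightarrow> (\<And>j. j \<in> I \<Longrightarrow> spanF F (f j)) \<Longrightarrow> spanF F (\<lambda>i. \<Sum>j\<in>I. f j i)"
proof (induction I rule: finite_induct)
  case empty then show ?case using spanF_zero by simp
next
  case (insert x I)
  then show ?case using spanF_add[of F "f x" "\<lambda>i. \<Sum>j\<in>I. f j i"] by simp
qed

lemma neg_add_eq_iff: "(- k + h = (g::'g::group_add)) \<longleftrightarrow> h = k + g"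
  by (metis add_minus_cancel)

lemma lreg_apply:
  "lreg k (\<lambda>h. a * delta g1 h + b * delta g2 h) h = a * delta (k + g1) h + b * delta (k + g2) h"
  unfolding lreg_def delta_def by (simp add: neg_add_eq_iff)

lemma comb_apply:
  fixes g1 g2 :: "'g::group_add"
  assumes "finite S"
  shows "(\<Sum>k\<in>S. c k * lreg k (\<lambda>h. a * delta g1 h + b * delta g2 h) h)
     = a * (if h - g1 \<in> S then c (h - g1) else 0) + b * (if h - g2 \<in> S then c (h - g2) else 0)"
proof -
  have iff: "(h = k + g) \<longleftrightarrow> (k = h - g)" for k g :: 'g by (metis add_diff_cancel diff_add_cancel)
  have "(\<Sum>k\<in>S. c k * lreg k (\<lambda>h. a * delta g1 h + b * delta g2 h) h)
     = (\<Sum>k\<in>S. a * (if k = h - g1 then c k else 0)) + (\<Sum>k\<in>S. b * (if k = h - g2 then c k else 0))"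
    unfolding lreg_apply sum.distrib[symmetric]
    by (rule sum.cong) (auto simp: delta_def iff algebra_simps)
  also have "\<dots> = a * (if h - g1 \<in> S then c (h - g1) else 0) + b * (if h - g2 \<in> S then c (h - g2) else 0)"
    using assms by (simp add: sum_distrib_left[symmetric])
  finally show ?thesis .
qed



lemma shift_sum:
  fixes g :: "'g::group_add"
  assumes "finite S" "finite U" "(\<lambda>k. k + g) ` S \<subseteq> U"
  shows "(\<Sum>h\<in>U. (cmod (if h - g \<in> S then c (h - g) else 0))\<^sup>2) = (\<Sum>k\<in>S. (cmod (c k))\<^sup>2)"
proof -
  have im: "h \<in> (\<lambda>k. k + g) ` S" if "h - g \<in> S" for h
    using that by (metis diff_add_cancel imageI)
  have "(\<Sum>h\<in>U. (cmod (if h - g \<in> S then c (h - g) else 0))\<^sup>2)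
      = (\<Sum>h\<in>(\<lambda>k. k + g) ` S. (cmod (if h - g \<in> S then c (h - g) else 0))\<^sup>2)"
    by (rule sum.mono_neutral_right) (use assms in \<open>auto dest: im\<close>)
  also have "\<dots> = (\<Sum>k\<in>S. (cmod (if k + g - g \<in> S then c (k + g - g) else 0))\<^sup>2)"
    by (rule sum.reindex[unfolded comp_def]) (simp add: inj_on_def)
  also have "\<dots> = (\<Sum>k\<in>S. (cmod (c k))\<^sup>2)" by simp
  finally show ?thesis .
qed

lemma riesz_bounds:
  fixes g1 g2 :: "'g::group_add" and a b :: complex and c :: "'g \<Rightarrow> complex"
  assumes S: "finite S"
  defines "y \<equiv> (\<lambda>h. \<Sum>k\<in>S. c k * lreg k (\<lambda>h. a * delta g1 h + b * delta g2 h) h)"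
  defines "Q \<equiv> (\<Sum>k\<in>S. (cmod (c k))\<^sup>2)"
  shows "(cmod a - cmod b)\<^sup>2 * Q \<le> (l2norm y)\<^sup>2 \<and> (l2norm y)\<^sup>2 \<le> (cmod a + cmod b)\<^sup>2 * Q"
proof -
  define cz where "cz g h = (if h - g \<in> S then c (h - g) else 0)" for g h
  define U where "U = (\<lambda>k. k + g1) ` S \<union> (\<lambda>k. k + g2) ` S"
  have U: "finite U" using S by (simp add: U_def)
  have yeq: "y h = a * cz g1 h + b * cz g2 h" for h
    unfolding y_def cz_def using comb_apply[OF S] by simp
  have y0: "y h = 0" if "h \<notin> U" for h
  proof -
    have "h - g1 \<notin> S" "h - g2 \<notin> S" using that unfolding U_def
      by (metis diff_add_cancel image_eqI UnI1 UnI2)+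
    then show ?thesis by (simp add: yeq cz_def)
  qed
  have ny: "l2norm y = L2_set (\<lambda>i. cmod (y i)) U" using l2_finsupp[of U y, OF U y0] by blast
  have L1: "L2_set (\<lambda>h. cmod (cz g1 h)) U = sqrt Q"
    unfolding L2_set_def cz_def Q_def by (subst shift_sum) (use S U in \<open>auto simp: U_def\<close>)
  have L2: "L2_set (\<lambda>h. cmod (cz g2 h)) U = sqrt Q"
    unfolding L2_set_def cz_def Q_def by (subst shift_sum) (use S U in \<open>auto simp: U_def\<close>)
  have Q0: "0 \<le> Q" unfolding Q_def by (simp add: sum_nonneg)
  have up: "l2norm y \<le> (cmod a + cmod b) * sqrt Q"
  proof -
    have "L2_set (\<lambda>i. cmod (y i)) U \<le> L2_set (\<lambda>h. cmod a * cmod (cz g1 h) + cmod b * cmod (cz g2 h)) U"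
      by (rule L2_set_mono) (auto simp: yeq norm_mult[symmetric] norm_triangle_ineq)
    also have "\<dots> \<le> L2_set (\<lambda>h. cmod a * cmod (cz g1 h)) U + L2_set (\<lambda>h. cmod b * cmod (cz g2 h)) U"
      by (rule L2_set_triangle_ineq)
    also have "\<dots> = cmod a * sqrt Q + cmod b * sqrt Q"
      by (simp add: L2_set_right_distrib[symmetric] L1 L2)
    finally show ?thesis by (simp add: ny algebra_simps)
  qed
  have lowa: "cmod a * sqrt Q \<le> l2norm y + cmod b * sqrt Q"
  proof -
    have "cmod a * sqrt Q = L2_set (\<lambda>h. cmod a * cmod (cz g1 h)) U"
      by (simp add: L2_set_right_distrib[symmetric] L1)
    also have "\<dots> \<le> L2_set (\<lambda>h. cmod (y h) + cmod b * cmod (cz g2 h)) U"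
    proof (rule L2_set_mono)
      fix h
      have "cmod (a * cz g1 h) \<le> cmod (y h) + cmod (b * cz g2 h)"
        using norm_triangle_ineq4[of "y h" "b * cz g2 h"] by (simp add: yeq)
      then show "cmod a * cmod (cz g1 h) \<le> cmod (y h) + cmod b * cmod (cz g2 h)"
        by (simp add: norm_mult)
    qed simp
    also have "\<dots> \<le> L2_set (\<lambda>h. cmod (y h)) U + L2_set (\<lambda>h. cmod b * cmod (cz g2 h)) U"
      by (rule L2_set_triangle_ineq)
    also have "\<dots> = l2norm y + cmod b * sqrt Q"
      by (simp add: L2_set_right_distrib[symmetric] L2 ny)
    finally show ?thesis .
  qed
  have lowb: "cmod b * sqrt Q \<le> l2norm y + cmod a * sqrt Q"
  proof -
    have "cmod b * sqrt Q = L2_set (\<lambda>h. cmod b * cmod (cz g2 h)) U"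
      by (simp add: L2_set_right_distrib[symmetric] L2)
    also have "\<dots> \<le> L2_set (\<lambda>h. cmod (y h) + cmod a * cmod (cz g1 h)) U"
    proof (rule L2_set_mono)
      fix h
      have "cmod (b * cz g2 h) \<le> cmod (y h) + cmod (a * cz g1 h)"
        using norm_triangle_ineq4[of "y h" "a * cz g1 h"] by (simp add: yeq)
      then show "cmod b * cmod (cz g2 h) \<le> cmod (y h) + cmod a * cmod (cz g1 h)"
        by (simp add: norm_mult)
    qed simp
    also have "\<dots> \<le> L2_set (\<lambda>h. cmod (y h)) U + L2_set (\<lambda>h. cmod a * cmod (cz g1 h)) U"
      by (rule L2_set_triangle_ineq)
    also have "\<dots> = l2norm y + cmod a * sqrt Q"
      by (simp add: L2_set_right_distrib[symmetric] L1 ny)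
    finally show ?thesis .
  qed
  have low: "\<bar>cmod a - cmod b\<bar> * sqrt Q \<le> l2norm y"
    using lowa lowb by (auto simp: abs_if algebra_simps)
  have sq: "sqrt Q ^ 2 = Q" using Q0 by simp
  have "(\<bar>cmod a - cmod b\<bar> * sqrt Q)\<^sup>2 \<le> (l2norm y)\<^sup>2"
    by (rule power_mono[OF low]) (simp add: Q0)
  moreover have "(l2norm y)\<^sup>2 \<le> ((cmod a + cmod b) * sqrt Q)\<^sup>2"
    by (rule power_mono[OF up]) (simp add: l2norm_def infsum_nonneg)
  ultimately show ?thesis by (simp add: power_mult_distrib sq)
qed



lemma delta_approx:
  fixes g1 g2 g :: "'g::group_add" and a b :: complex
  assumes ab: "cmod b < cmod a" and e: "0 < \<epsilon>"
  shows "\<exists>v. spanF (\<lambda>k. lreg k (\<lambda>h. a * delta g1 h + b * delta g2 h)) v \<and>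
             (\<lambda>i. delta g i - v i) \<in> ell2 \<and> l2norm (\<lambda>i. delta g i - v i) < \<epsilon>"
proof -
  define F where "F = (\<lambda>k. lreg k (\<lambda>h. a * delta g1 h + b * delta g2 h))"
  have a0: "a \<noteq> 0" using ab by auto
  define q where "q = b / a"
  have q1: "cmod q < 1" using ab a0 by (simp add: q_def norm_divide divide_less_eq)
  obtain N where N: "cmod q ^ N < \<epsilon>" using real_arch_pow_inv[OF e q1] by blast
  define d where "d = - g1 + g2"
  define gs where "gs n = ((\<lambda>x. x + d) ^^ n) g" for n
  have gsS: "gs (Suc n) = gs n + d" for n by (simp add: gs_def)
  have key: "F (gs n - g1) i = a * delta (gs n) i + b * delta (gs (Suc n)) i" for n i
  proof -
    have "gs n - g1 + g2 = gs (Suc n)" unfolding gsS d_def by (simp add: add.assoc[symmetric])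
    then show ?thesis unfolding F_def lreg_apply by simp
  qed
  define v where "v i = (\<Sum>n<N. ((-q)^n / a) * F (gs n - g1) i)" for i
  have tele: "(\<Sum>n<M. ((-q)^n / a) * F (gs n - g1) i) = delta g i - (-q)^M * delta (gs M) i" for M i
  proof (induction M)
    case 0 then show ?case by (simp add: gs_def)
  next
    case (Suc M)
    have "((-q)^M / a) * (a * delta (gs M) i + b * delta (gs (Suc M)) i)
        = (-q)^M * delta (gs M) i - (-q)^(Suc M) * delta (gs (Suc M)) i"
      using a0 unfolding q_def by (simp add: field_simps)
    then have "((-q)^M / a) * F (gs M - g1) i
        = (-q)^M * delta (gs M) i - (-q)^(Suc M) * delta (gs (Suc M)) i"
      by (simp only: key)
    then show ?case unfolding sum.lessThan_Suc Suc by simp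
  qed
  have sp: "spanF F v"
    unfolding v_def by (rule spanF_sum) (simp_all only: spanF_single finite_lessThan)
  have err: "(\<lambda>i. delta g i - v i) = (\<lambda>i. (-q)^N * delta (gs N) i)"
    unfolding v_def tele by simp
  have "(\<lambda>i. (-q)^N * delta (gs N) i) \<in> ell2 \<and> l2norm (\<lambda>i. (-q)^N * delta (gs N) i) = cmod q ^ N"
    using l2_finsupp[of "{gs N}" "\<lambda>i. (-q)^N * delta (gs N) i"]
    by (simp add: delta_def L2_set_def norm_power)
  then have "(\<lambda>i. delta g i - v i) \<in> ell2 \<and> l2norm (\<lambda>i. delta g i - v i) < \<epsilon>"
    using err N by simp
  then show ?thesis using sp unfolding F_def by blast
qed



lemma sum_le_inf:
  assumes "r \<in> ell2" "finite F"
  shows "(\<Sum>i\<in>F. (cmod (r i))\<^sup>2) \<le> (\<Sum>\<^sub>\<infinity>i. (cmod (r i))\<^sup>2)"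
proof -
  have "(\<Sum>i\<in>F. (cmod (r i))\<^sup>2) = infsum (\<lambda>i. (cmod (r i))\<^sup>2) F" using assms by simp
  also have "\<dots> \<le> (\<Sum>\<^sub>\<infinity>i. (cmod (r i))\<^sup>2)"
    by (rule infsum_mono_neutral) (use assms in \<open>auto simp: ell2_def\<close>)
  finally show ?thesis .
qed

lemma tail:
  assumes x: "x \<in> ell2" and r: "0 < r"
  shows "\<exists>U. finite U \<and> (\<lambda>h. if h \<in> U then 0 else x h) \<in> ell2 \<and>
             l2norm (\<lambda>h. if h \<in> U then 0 else x h) < r"
proof -
  define f where "f i = (cmod (x i))\<^sup>2" for i
  define s where "s = (\<Sum>\<^sub>\<infinity>i. f i)"
  have sm: "f summable_on UNIV" using x unfolding ell2_def f_def[abs_def] by simp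
  have ep: "0 < r\<^sup>2 / 2" using r by simp
  obtain U where U: "finite U" "dist (sum f U) s \<le> r\<^sup>2 / 2"
    using infsum_finite_approximation[OF sm ep] unfolding s_def by blast
  define t where "t h = (if h \<in> U then 0 else x h)" for h
  have bnd: "L2_set (\<lambda>i. cmod (t i)) F \<le> sqrt (r\<^sup>2 / 2)" if F: "finite F" for F
  proof -
    have "(\<Sum>i\<in>F. (cmod (t i))\<^sup>2) \<le> (\<Sum>i\<in>F \<union> U. (cmod (t i))\<^sup>2)"
      by (rule sum_mono2) (use F U in auto)
    also have "\<dots> = (\<Sum>i\<in>F \<union> U. f i) - (\<Sum>i\<in>F \<union> U. if i \<in> U then f i else 0)"
      unfolding sum_subtractf[symmetric] by (rule sum.cong) (auto simp: t_def f_def)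
    also have "(\<Sum>i\<in>F \<union> U. if i \<in> U then f i else 0) = sum f U"
      using F U by (simp add: sum.If_cases Int_absorb1)
    also have "(\<Sum>i\<in>F \<union> U. f i) \<le> s"
      unfolding s_def f_def by (rule sum_le_inf[OF x]) (use F U in auto)
    finally have "(\<Sum>i\<in>F. (cmod (t i))\<^sup>2) \<le> s - sum f U" by simp
    also have "\<dots> \<le> r\<^sup>2 / 2" using U(2) unfolding dist_real_def by linarith
    finally show ?thesis unfolding L2_set_def by simp
  qed
  have "sqrt (r\<^sup>2 / 2) < sqrt (r\<^sup>2)" using r by (intro real_sqrt_less_mono) simp
  then have "sqrt (r\<^sup>2 / 2) < r" using r by simp
  with l2_bound[of t, OF bnd] U(1) show ?thesis unfolding t_def by fastforce
qed



lemma density: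
  fixes g1 g2 :: "'g::group_add" and a b :: complex
  assumes ab: "cmod b < cmod a" and x: "x \<in> ell2" and e: "0 < e"
  shows "\<exists>S c. finite S \<and>
     l2norm (\<lambda>i. x i - (\<Sum>k\<in>S. c k * lreg k (\<lambda>h. a * delta g1 h + b * delta g2 h) i)) < e"
proof -
  define F where "F = (\<lambda>k. lreg k (\<lambda>h. a * delta g1 h + b * delta g2 h))"
  obtain U where U: "finite U" "(\<lambda>h. if h \<in> U then 0 else x h) \<in> ell2"
    "l2norm (\<lambda>h. if h \<in> U then 0 else x h) < e / 2"
    using tail[OF x, of "e/2"] e by auto
  define t where "t h = (if h \<in> U then 0 else x h)" for h
  define M where "M = 1 + (\<Sum>g\<in>U. cmod (x g))"
  have M: "0 < M" unfolding M_def by (simp add: sum_nonneg add_pos_nonneg)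
  define \<epsilon> where "\<epsilon> = e / (2 * M)"
  have ep: "0 < \<epsilon>" using M e by (simp add: \<epsilon>_def)
  have "\<forall>g. \<exists>v. spanF F v \<and> (\<lambda>i. delta g i - v i) \<in> ell2 \<and> l2norm (\<lambda>i. delta g i - v i) < \<epsilon>"
    using delta_approx[OF ab ep] unfolding F_def by blast
  then obtain V where V: "\<And>g. spanF F (V g)" "\<And>g. (\<lambda>i. delta g i - V g i) \<in> ell2"
    "\<And>g. l2norm (\<lambda>i. delta g i - V g i) < \<epsilon>"
    by metis
  define w where "w i = (\<Sum>g\<in>U. x g * V g i)" for i
  have spw: "spanF F w"
    unfolding w_def by (rule spanF_sum) (use U(1) V(1) spanF_scale in auto)
  have dec: "(\<lambda>i. x i - w i) = (\<lambda>i. t i + (\<Sum>g\<in>U. x g * (delta g i - V g i)))"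
  proof
    fix i
    have "(\<Sum>g\<in>U. x g * delta g i) = (\<Sum>g\<in>U. if i = g then x g else 0)"
      by (rule sum.cong) (auto simp: delta_def)
    also have "\<dots> = (if i \<in> U then x i else 0)" using U(1) by simp
    finally have "(\<Sum>g\<in>U. x g * delta g i) = (if i \<in> U then x i else 0)" .
    then show "x i - w i = t i + (\<Sum>g\<in>U. x g * (delta g i - V g i))"
      by (simp add: w_def t_def right_diff_distrib sum_subtractf)
  qed
  have sc: "(\<lambda>i. x g * (delta g i - V g i)) \<in> ell2 \<and>
            l2norm (\<lambda>i. x g * (delta g i - V g i)) \<le> cmod (x g) * \<epsilon>" for g
  proof -
    have "l2norm (\<lambda>i. x g * (delta g i - V g i)) \<le> cmod (x g) * l2norm (\<lambda>i. delta g i - V g i)"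
      using l2_scale[OF V(2)] by blast
    also have "\<dots> \<le> cmod (x g) * \<epsilon>" using V(3)[of g] by (simp add: mult_left_mono less_imp_le)
    finally show ?thesis using l2_scale[OF V(2)] by blast
  qed
  have su: "(\<lambda>i. \<Sum>g\<in>U. x g * (delta g i - V g i)) \<in> ell2 \<and>
     l2norm (\<lambda>i. \<Sum>g\<in>U. x g * (delta g i - V g i)) \<le> (\<Sum>g\<in>U. l2norm (\<lambda>i. x g * (delta g i - V g i)))"
    using l2_sum[of U "\<lambda>g i. x g * (delta g i - V g i)"] U(1) sc by blast
  have "l2norm (\<lambda>i. \<Sum>g\<in>U. x g * (delta g i - V g i)) \<le> (\<Sum>g\<in>U. l2norm (\<lambda>i. x g * (delta g i - V g i)))"
    using su by blast
  also have "(\<Sum>g\<in>U. l2norm (\<lambda>i. x g * (delta g i - V g i))) \<le> (\<Sum>g\<in>U. cmod (x g) * \<epsilon>)"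
    by (rule sum_mono) (use sc in blast)
  also have "\<dots> = (M - 1) * \<epsilon>" by (simp add: M_def sum_distrib_right)
  also have "\<dots> < e / 2" using M e by (simp add: \<epsilon>_def field_simps)
  finally have su2: "l2norm (\<lambda>i. \<Sum>g\<in>U. x g * (delta g i - V g i)) < e / 2" .
  have tt: "t \<in> ell2" "l2norm t < e / 2" using U(2,3) unfolding t_def[abs_def] by auto
  have "l2norm (\<lambda>i. x i - w i) \<le> l2norm t + l2norm (\<lambda>i. \<Sum>g\<in>U. x g * (delta g i - V g i))"
    unfolding dec using l2_triangle[OF tt(1) su[THEN conjunct1]] by blast
  also have "\<dots> < e" using tt(2) su2 by simp
  finally have fin: "l2norm (\<lambda>i. x i - w i) < e" .
  from spw obtain S c where "finite S" "w = (\<lambda>i. \<Sum>k\<in>S. c k * F k i)" unfolding spanF_def by blast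
  with fin show ?thesis unfolding F_def by blast
qed

theorem proposition7p5:
  fixes \<gamma>1 \<gamma>2 :: "'g::{group_add, countable}" and a b :: complex
  assumes "\<gamma>1 \<noteq> \<gamma>2" and "a \<noteq> 0" and "b \<noteq> 0"
    and "cmod a \<noteq> cmod b"
  shows "riesz_basis (\<lambda>\<gamma>. lreg \<gamma> (\<lambda>h. a * delta \<gamma>1 h + b * delta \<gamma>2 h))"
  unfolding riesz_basis_def
proof (intro conjI)
  show "\<forall>k. lreg k (\<lambda>h. a * delta \<gamma>1 h + b * delta \<gamma>2 h) \<in> ell2"
  proof
    fix k
    have "lreg k (\<lambda>h. a * delta \<gamma>1 h + b * delta \<gamma>2 h) h = 0" if "h \<notin> {k + \<gamma>1, k + \<gamma>2}" for h
      unfolding lreg_apply using that by (simp add: delta_def)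
    then show "lreg k (\<lambda>h. a * delta \<gamma>1 h + b * delta \<gamma>2 h) \<in> ell2"
      using l2_finsupp[of "{k + \<gamma>1, k + \<gamma>2}"] by blast
  qed
next
  show "\<forall>x\<in>ell2. \<forall>e>0. \<exists>S c. finite S \<and>
     l2norm (\<lambda>i. x i - (\<Sum>k\<in>S. c k * lreg k (\<lambda>h. a * delta \<gamma>1 h + b * delta \<gamma>2 h) i)) < e"
  proof (intro ballI allI impI)
    fix x :: "'g \<Rightarrow> complex" and e :: real
    assume x: "x \<in> ell2" and e: "0 < e"
    show "\<exists>S c. finite S \<and>
     l2norm (\<lambda>i. x i - (\<Sum>k\<in>S. c k * lreg k (\<lambda>h. a * delta \<gamma>1 h + b * delta \<gamma>2 h) i)) < e"
    proof (cases "cmod b < cmod a")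
      case True
      then show ?thesis using density[OF True x e] by blast
    next
      case False
      then have lt: "cmod a < cmod b" using assms(4) by linarith
      have eq: "(\<lambda>h. b * delta \<gamma>2 h + a * delta \<gamma>1 h) = (\<lambda>h. a * delta \<gamma>1 h + b * delta \<gamma>2 h)"
        by (rule ext) (rule add.commute)
      show ?thesis using density[OF lt x e, of \<gamma>2 \<gamma>1] unfolding eq by blast
    qed
  qed
next
  show "\<exists>A B. 0 < A \<and> 0 < B \<and>
        (\<forall>S c. finite S \<longrightarrow>
           A * (\<Sum>k\<in>S. (cmod (c k))\<^sup>2) \<le> (l2norm (\<lambda>i. \<Sum>k\<in>S. c k * lreg k (\<lambda>h. a * delta \<gamma>1 h + b * delta \<gamma>2 h) i))\<^sup>2 \<and>
           (l2norm (\<lambda>i. \<Sum>k\<in>S. c k * lreg k (\<lambda>h. a * delta \<gamma>1 h + b * delta \<gamma>2 h) i))\<^sup>2 \<le> B * (\<Sum>k\<in>S. (cmod (c k))\<^sup>2))"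
  proof (rule exI, rule exI, intro conjI)
    show "0 < (cmod a - cmod b)\<^sup>2" using assms(4) by simp
    show "0 < (cmod a + cmod b)\<^sup>2" using assms(2) by (simp add: add_pos_nonneg) (smt (verit) norm_ge_zero zero_less_norm_iff)
    show "\<forall>S c. finite S \<longrightarrow>
           (cmod a - cmod b)\<^sup>2 * (\<Sum>k\<in>S. (cmod (c k))\<^sup>2) \<le> (l2norm (\<lambda>i. \<Sum>k\<in>S. c k * lreg k (\<lambda>h. a * delta \<gamma>1 h + b * delta \<gamma>2 h) i))\<^sup>2 \<and>
           (l2norm (\<lambda>i. \<Sum>k\<in>S. c k * lreg k (\<lambda>h. a * delta \<gamma>1 h + b * delta \<gamma>2 h) i))\<^sup>2 \<le> (cmod a + cmod b)\<^sup>2 * (\<Sum>k\<in>S. (cmod (c k))\<^sup>2)"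
    proof (intro allI impI)
      fix S :: "'g set" and c :: "'g \<Rightarrow> complex" assume S: "finite S"
      show "(cmod a - cmod b)\<^sup>2 * (\<Sum>k\<in>S. (cmod (c k))\<^sup>2) \<le> (l2norm (\<lambda>i. \<Sum>k\<in>S. c k * lreg k (\<lambda>h. a * delta \<gamma>1 h + b * delta \<gamma>2 h) i))\<^sup>2 \<and>
           (l2norm (\<lambda>i. \<Sum>k\<in>S. c k * lreg k (\<lambda>h. a * delta \<gamma>1 h + b * delta \<gamma>2 h) i))\<^sup>2 \<le> (cmod a + cmod b)\<^sup>2 * (\<Sum>k\<in>S. (cmod (c k))\<^sup>2)"
        by (rule riesz_bounds[OF S])
    qed
  qed
qed

end
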